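(* Let $\mathbb{K}\in\{\mathbb{R},\mathbb{C}\}$, $\mathbf{R}_U\in\mathbb{K}^{n\times n}$ self-adjoint positive definite, $U:=\mathbb{K}^n$ with $\langle\mathbf{x},\mathbf{y}\rangle_U:=\langle\mathbf{R}_U\mathbf{x},\mathbf{y}\rangle$ and norm $\|\cdot\|_U$. Fix $\mu$, $\mathbf{A}(\mu)\in\mathbb{K}^{n\times n}$, $\mathbf{b}(\mu)\in\mathbb{K}^n$, $\mathbf{u}(\mu)$ with $\mathbf{A}(\mu)\mathbf{u}(\mu)=\mathbf{b}(\mu)$, a subspace $U_r\subseteq U$, and $\mathbf{\Theta}\in\mathbb{K}^{k\times n}$. For $\mathbf{y}\in\mathbb{K}^n$ let $$\|\mathbf{y}\|_{U_r'}^{\mathbf{\Theta}}:=\max_{\mathbf{x}\in U_r\setminus\{\mathbf{0}\}}\frac{|\langle\mathbf{\Theta}\mathbf{R}_U^{-1}\mathbf{y},\mathbf{\Theta}\mathbf{x}\rangle|}{\|\mathbf{\Theta}\mathbf{x}\|},$$ $$\alpha_r^{\mathbf{\Theta}}(\mu):=\min_{\mathbf{x}\in U_r\setminus\{\mathbf{0}\}}\frac{\|\mathbf{A}(\mu)\mathbf{x}\|_{U_r'}^{\mathbf{\Theta}}}{\|\mathbf{x}\|_U},\qquad\beta_r^{\mathbf{\Theta}}(\mu):=\max_{\mathbf{x}\in(\mathrm{span}\{\mathbf{u}(\mu)\}+U_r)\setminus\{\mathbf{0}\}}\frac{\|\mathbf{A}(\mu)\mathbf{x}\|_{U_r'}^{\mathbf{\Theta}}}{\|\mathbf{x}\|_U}.$$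 Let $\mathbf{u}_r(\mu)\in U_r$ satisfy $\|\mathbf{b}(\mu)-\mathbf{A}(\mu)\mathbf{u}_r(\mu)\|_{U_r'}^{\mathbf{\Theta}}=0$. If $\alpha_r^{\mathbf{\Theta}}(\mu)>0$, then $$\|\mathbf{u}(\mu)-\mathbf{u}_r(\mu)\|_U\le\Big(1+\frac{\beta_r^{\mathbf{\Theta}}(\mu)}{\alpha_r^{\mathbf{\Theta}}(\mu)}\Big)\|\mathbf{u}(\mu)-\mathbf{P}_{U_r}\mathbf{u}(\mu)\|_U,$$ where $\mathbf{P}_{U_r}$ is the $\langle\cdot,\cdot\rangle_U$-orthogonal projection onto $U_r$.
   Context: $\langle\mathbf{x},\mathbf{y}\rangle=\mathbf{x}^{\mathrm{H}}\mathbf{y}$ is the canonical inner product and $\|\cdot\|$ the Euclidean norm. The semi-norm $\|\cdot\|_{U_r'}^{\mathbf{\Theta}}$ is understood to be used where it is well defined, i.e., when $\mathbf{\Theta}\mathbf{x}\neq\mathbf{0}$ for all nonzero $\mathbf{x}\in U_r$. *)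

theory Defs
  imports "HOL-Analysis.Analysis"
begin

text \<open>Vectors in K^n are modelled as complex^'n whose entries lie in K, where
  K is either the reals (embedded in the complex numbers) or all of the complex numbers.\<close>

definition cinner :: "complex^'n \<Rightarrow> complex^'n \<Rightarrow> complex" where
  "cinner x y = (\<Sum>i\<in>UNIV. cnj (x $ i) * y $ i)"

definition in_K :: "complex set \<Rightarrow> complex^'n \<Rightarrow> bool" where
  "in_K K x \<longleftrightarrow> (\<forall>i. x $ i \<in> K)"

definition mat_in_K :: "complex set \<Rightarrow> complex^'n^'m \<Rightarrow> bool" where
  "mat_in_K K M \<longleftrightarrow> (\<forall>i j. M $ i $ j \<in> K)"

definition hermitian :: "complex^'n^'n \<Rightarrow> bool" where
  "hermitian M \<longleftrightarrow> (\<forall>i j. M $ i $ j = cnj (M $ j $ i))"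

definition pos_def :: "complex^'n^'n \<Rightarrow> bool" where
  "pos_def M \<longleftrightarrow> (\<forall>x. x \<noteq> 0 \<longrightarrow> Re (cinner x (M *v x)) > 0)"

definition K_subspace :: "complex set \<Rightarrow> (complex^'n) set \<Rightarrow> bool" where
  "K_subspace K S \<longleftrightarrow> S \<subseteq> {x. in_K K x} \<and> 0 \<in> S \<and>
     (\<forall>x\<in>S. \<forall>y\<in>S. x + y \<in> S) \<and> (\<forall>c\<in>K. \<forall>x\<in>S. c *s x \<in> S)"

definition inner_U :: "complex^'n^'n \<Rightarrow> complex^'n \<Rightarrow> complex^'n \<Rightarrow> complex" where
  "inner_U R x y = cinner (R *v x) y"

definition norm_U :: "complex^'n^'n \<Rightarrow> complex^'n \<Rightarrow> real" where
  "norm_U R x = sqrt (Re (inner_U R x x))"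

definition dual_norm_Theta ::
  "complex^'n^'n \<Rightarrow> complex^'n^'k \<Rightarrow> (complex^'n) set \<Rightarrow> complex^'n \<Rightarrow> real" where
  "dual_norm_Theta R Theta Ur y =
     (SUP x \<in> Ur - {0}. cmod (cinner (Theta *v (matrix_inv R *v y)) (Theta *v x)) / norm (Theta *v x))"

definition alpha_Theta ::
  "complex^'n^'n \<Rightarrow> complex^'n^'k \<Rightarrow> (complex^'n) set \<Rightarrow> complex^'n^'n \<Rightarrow> real" where
  "alpha_Theta R Theta Ur A =
     (INF x \<in> Ur - {0}. dual_norm_Theta R Theta Ur (A *v x) / norm_U R x)"

definition beta_Theta ::
  "complex set \<Rightarrow> complex^'n^'n \<Rightarrow> complex^'n^'k \<Rightarrow> (complex^'n) set \<Rightarrow> complex^'n^'n \<Rightarrow> complex^'n \<Rightarrow> real" where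
  "beta_Theta K R Theta Ur A u =
     (SUP x \<in> {c *s u + v | c v. c \<in> K \<and> v \<in> Ur} - {0}.
        dual_norm_Theta R Theta Ur (A *v x) / norm_U R x)"

definition proj_U :: "complex^'n^'n \<Rightarrow> (complex^'n) set \<Rightarrow> complex^'n \<Rightarrow> complex^'n" where
  "proj_U R Ur u = (THE p. p \<in> Ur \<and> (\<forall>x\<in>Ur. inner_U R (u - p) x = 0))"

end

theory Submission imports Defs begin

lemma cinner_add_left: "cinner (x + y) z = cinner x z + cinner y z"
  by (simp add: cinner_def sum.distrib distrib_right)
lemma cinner_add_right: "cinner z (x + y) = cinner z x + cinner z y"
  by (simp add: cinner_def sum.distrib distrib_left)
lemma cinner_diff_left: "cinner (x - y) z = cinner x z - cinner y z"
  by (simp add: cinner_def sum_subtractf left_diff_distrib)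
lemma cinner_diff_right: "cinner z (x - y) = cinner z x - cinner z y"
  by (simp add: cinner_def sum_subtractf right_diff_distrib)
lemma cinner_smult_left: "cinner (c *s x) z = cnj c * cinner x z"
  by (simp add: cinner_def sum_distrib_left mult.assoc)
lemma cinner_smult_right: "cinner z (c *s x) = c * cinner z x"
  by (simp add: cinner_def sum_distrib_left algebra_simps)
lemma cinner_zero_left[simp]: "cinner 0 z = 0" by (simp add: cinner_def)
lemma cinner_zero_right[simp]: "cinner z 0 = 0" by (simp add: cinner_def)
lemma cinner_cnj: "cnj (cinner x y) = cinner y x"
  by (simp add: cinner_def mult.commute)
lemma cinner_self: "cinner x x = of_real ((norm x)^2)"
proof -
  have "cinner x x = (\<Sum>i\<in>UNIV. of_real ((cmod (x$i))^2))"
    unfolding cinner_def by (intro sum.cong refl) (metis complex_norm_square mult.commute of_real_power)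
  also have "\<dots> = of_real (\<Sum>i\<in>UNIV. (cmod (x$i))^2)" by (simp only: of_real_sum)
  also have "\<dots> = of_real ((norm x)^2)"
    unfolding norm_vec_def L2_set_def by (subst real_sqrt_pow2) (auto intro: sum_nonneg)
  finally show ?thesis .
qed

lemma mv_smult: "M *v (c *s x) = c *s (M *v (x::complex^'n))"
  by (simp add: vec_eq_iff matrix_vector_mult_def sum_distrib_left algebra_simps)

lemma herm_adj: assumes "hermitian R" shows "cinner (R *v x) y = cinner x (R *v y)"
proof -
  have "cinner (R *v x) y = (\<Sum>i\<in>UNIV. \<Sum>j\<in>UNIV. cnj (R$i$j) * cnj (x$j) * y$i)"
    unfolding cinner_def matrix_vector_mult_def
    by (simp add: cnj_sum sum_distrib_right)
  also have "\<dots> = (\<Sum>j\<in>UNIV. \<Sum>i\<in>UNIV. cnj (R$i$j) * cnj (x$j) * y$i)"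
    by (rule sum.swap)
  also have "\<dots> = (\<Sum>j\<in>UNIV. cnj (x$j) * (\<Sum>i\<in>UNIV. R$j$i * y$i))"
    unfolding sum_distrib_left
    using assms unfolding hermitian_def
    by (intro sum.cong refl) (metis mult.commute mult.left_commute)
  also have "\<dots> = cinner x (R *v y)"
    by (simp add: cinner_def matrix_vector_mult_def)
  finally show ?thesis .
qed

lemma cs: "cmod (cinner a b) \<le> norm a * norm b"
proof -
  have "cmod (cinner a b) \<le> (\<Sum>i\<in>UNIV. cmod (cnj (a$i) * b$i))"
    unfolding cinner_def by (rule norm_sum)
  also have "\<dots> = (\<Sum>i\<in>UNIV. \<bar>cmod (a$i)\<bar> * \<bar>cmod (b$i)\<bar>)" by (simp add: norm_mult)
  also have "\<dots> \<le> L2_set (\<lambda>i. cmod (a$i)) UNIV * L2_set (\<lambda>i. cmod (b$i)) UNIV"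
    by (rule L2_set_mult_ineq)
  also have "\<dots> = norm a * norm b" by (simp add: norm_vec_def)
  finally show ?thesis .
qed

lemma Reals_cnj: "z \<in> \<real> \<Longrightarrow> cnj z \<in> \<real>" by (simp add: complex_is_Real_iff)

lemma in_K_real_cinner:
  assumes "mat_in_K \<real> R" "in_K \<real> a" "in_K \<real> y"
  shows "cinner (R *v a) y \<in> \<real>"
  using assms unfolding cinner_def mat_in_K_def in_K_def matrix_vector_mult_def
  by (auto intro!: sum_in_Reals Reals_mult Reals_cnj)

lemma cont_nth[continuous_intros]:
  fixes f :: "'b::topological_space \<Rightarrow> 'c::real_normed_vector^'n"
  shows "continuous_on S f \<Longrightarrow> continuous_on S (\<lambda>x. f x $ i)"
  using bounded_linear.continuous_on[OF bounded_linear_vec_nth, of S f i] by simp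

lemma cont_cinner[continuous_intros]:
  fixes f g :: "'b::topological_space \<Rightarrow> complex^'n"
  shows "continuous_on S f \<Longrightarrow> continuous_on S g \<Longrightarrow> continuous_on S (\<lambda>x. cinner (f x) (g x))"
  unfolding cinner_def by (intro continuous_intros)

lemma ofreal_smult: "complex_of_real r *s x = r *\<^sub>R (x::complex^'n)"
  by (simp add: vec_eq_iff scaleR_conv_of_real[where 'a=complex])

lemma pd_lower:
  fixes R :: "complex^'n^'n"
  assumes "pos_def R"
  shows "\<exists>m>0. \<forall>x. m * (norm x)^2 \<le> Re (cinner x (R *v x))"
proof -
  define Q where "Q x = Re (cinner x (R *v x))" for x :: "complex^'n"
  have cQ: "continuous_on S Q" for S
    unfolding Q_def by (intro continuous_intros)
  have "sphere (0::complex^'n) 1 \<noteq> {}" by simp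
  then obtain x0 where x0: "x0 \<in> sphere 0 1" and min: "\<And>y. y \<in> sphere 0 1 \<Longrightarrow> Q x0 \<le> Q y"
    using continuous_attains_inf[OF compact_sphere _ cQ] by blast
  have "x0 \<noteq> 0" using x0 by auto
  hence pos: "Q x0 > 0" using assms unfolding pos_def_def Q_def by auto
  have "Q x0 * (norm x)^2 \<le> Q x" for x
  proof (cases "x = 0")
    case True then show ?thesis by (simp add: Q_def)
  next
    case False
    define c where "c = complex_of_real (1 / norm x)"
    have ny: "c *s x \<in> sphere 0 1" unfolding c_def ofreal_smult using False by simp
    have "Q (c *s x) = (1 / norm x)^2 * Q x"
      by (simp add: Q_def mv_smult cinner_smult_left cinner_smult_right c_def power2_eq_square)
    with min[OF ny] have "Q x0 \<le> (1 / norm x)^2 * Q x" by simp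
    thus ?thesis using False by (simp add: field_simps)
  qed
  with pos show ?thesis unfolding Q_def by (metis mult.commute)
qed

lemma cont_mv[continuous_intros]:
  fixes M :: "complex^'n^'m"
  shows "continuous_on S f \<Longrightarrow> continuous_on S (\<lambda>x. M *v f x)"
  using bounded_linear.continuous_on[OF matrix_vector_mul_bounded_linear, of S f M] by simp

lemma herm_sym: "hermitian R \<Longrightarrow> cinner (R *v y) a = cnj (cinner (R *v a) y)"
  by (simp add: herm_adj cinner_cnj)

lemma expand:
  assumes "hermitian R"
  shows "Re (inner_U R (a - complex_of_real s *s y) (a - complex_of_real s *s y)) =
    Re (inner_U R a a) - 2 * s * Re (inner_U R a y) + s^2 * Re (inner_U R y y)"
  unfolding inner_U_def
  by (simp add: matrix_vector_mult_diff_distrib mv_smult cinner_diff_left cinner_diff_right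
      cinner_smult_left cinner_smult_right herm_sym[OF assms, of y a] power2_eq_square algebra_simps)

lemma normU_sq: "hermitian R \<Longrightarrow> Re (inner_U R x x) = Re (cinner x (R *v x))"
  by (simp add: inner_U_def herm_adj)

lemma quad_zero:
  fixes B Q :: real
  assumes Q: "Q \<ge> 0" and h: "\<forall>s. 0 \<le> s^2 * Q - 2 * s * B"
  shows "B = 0"
proof -
  define s where "s = B / (Q + 1)"
  have "0 \<le> s^2 * Q - 2 * s * B" using h by blast
  hence "0 \<le> (s^2 * Q - 2 * s * B) * (Q+1)^2" using Q by simp
  also have "\<dots> = (s*(Q+1))^2 * Q - 2*(s*(Q+1))*B*(Q+1)"
    by (simp add: power2_eq_square algebra_simps)
  also have "s * (Q+1) = B" using Q by (simp add: s_def)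
  also have "B^2 * Q - 2*B*B*(Q+1) = -(B^2 * (Q + 2))"
    by (simp add: power2_eq_square algebra_simps)
  finally have "B^2 * (Q+2) \<le> 0" by simp
  moreover have "B^2 * (Q+2) \<ge> 0" using Q by simp
  ultimately have "B^2 * (Q+2) = 0" by linarith
  thus ?thesis using Q by simp
qed

lemma K_facts: assumes "K = \<real> \<or> K = UNIV" shows "complex_of_real r \<in> K" "-1 \<in> K"
  using assms by auto

lemma sub_smult_real: assumes "K = \<real> \<or> K = UNIV" "K_subspace K Ur" "x \<in> Ur"
  shows "complex_of_real r *s x \<in> Ur"
  using assms K_facts[OF assms(1)] unfolding K_subspace_def by blast

lemma neg_smult: "(-1::complex) *s x = - x" by (simp add: vec_eq_iff)

lemma sub_diff: assumes "K = \<real> \<or> K = UNIV" "K_subspace K Ur" "x \<in> Ur" "y \<in> Ur"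
  shows "x - y \<in> Ur"
proof -
  have "(-1) *s y \<in> Ur" using assms K_facts[OF assms(1)] unfolding K_subspace_def by blast
  hence "x + (-1) *s y \<in> Ur" using assms unfolding K_subspace_def by blast
  thus ?thesis by (simp add: neg_smult)
qed

lemma sub_real: assumes "K = \<real> \<or> K = UNIV" "K_subspace K Ur" shows "subspace Ur"
  unfolding subspace_def
proof (intro conjI ballI allI)
  show "0 \<in> Ur" using assms unfolding K_subspace_def by blast
  show "x + y \<in> Ur" if "x \<in> Ur" "y \<in> Ur" for x y using that assms unfolding K_subspace_def by blast
  show "c *\<^sub>R x \<in> Ur" if "x \<in> Ur" for c x
    using sub_smult_real[OF assms that, of c] by (simp add: ofreal_smult)
qed

lemma proj_prop:
  fixes R :: "complex^'n^'n"
  assumes K: "K = \<real> \<or> K = UNIV" and RK: "mat_in_K K R" and herm: "hermitian R" and pd: "pos_def R"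
    and Ur: "K_subspace K Ur" and uK: "in_K K u"
  shows "proj_U R Ur u \<in> Ur \<and> (\<forall>x\<in>Ur. inner_U R (u - proj_U R Ur u) x = 0)"
proof -
  obtain m where m: "m > 0" "\<And>x. m * (norm x)^2 \<le> Re (cinner x (R *v x))"
    using pd_lower[OF pd] by blast
  define G where "G x = Re (inner_U R (u - x) (u - x))" for x
  have Glow: "m * (norm (u - x))^2 \<le> G x" for x
    unfolding G_def normU_sq[OF herm] by (rule m(2))
  have cG: "continuous_on S G" for S unfolding G_def inner_U_def by (intro continuous_intros)
  define S where "S = Ur \<inter> {x. G x \<le> G 0}"
  have subs: "subspace Ur" by (rule sub_real[OF K Ur])
  have "closed S" unfolding S_def
    by (intro closed_Int closed_subspace[OF subs] closed_Collect_le cG continuous_on_const)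
  moreover have "bounded S"
    unfolding bounded_iff
  proof (intro exI ballI)
    fix x assume "x \<in> S"
    hence "m * (norm (u - x))^2 \<le> G 0" using Glow[of x] unfolding S_def by auto
    hence "(norm (u - x))^2 \<le> G 0 / m" using m(1) by (simp add: field_simps)
    hence "norm (u - x) \<le> sqrt (G 0 / m)" by (rule real_le_rsqrt)
    moreover have "norm x \<le> norm u + norm (u - x)" by (metis norm_triangle_sub add.commute norm_minus_commute)
    ultimately show "norm x \<le> norm u + sqrt (G 0 / m)" by linarith
  qed
  ultimately have cS: "compact S" by (simp add: compact_eq_bounded_closed)
  have "0 \<in> Ur" using Ur unfolding K_subspace_def by blast
  hence "S \<noteq> {}" unfolding S_def by blast
  then obtain p where pS: "p \<in> S" and pmin: "\<And>y. y \<in> S \<Longrightarrow> G p \<le> G y"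
    using continuous_attains_inf[OF cS _ cG] by blast
  have pUr: "p \<in> Ur" using pS S_def by auto
  have pmin': "G p \<le> G y" if "y \<in> Ur" for y
  proof (cases "y \<in> S")
    case True then show ?thesis by (rule pmin)
  next
    case False
    hence "G y > G 0" using that S_def by auto
    moreover have "G p \<le> G 0" using pS S_def by auto
    ultimately show ?thesis by simp
  qed
  have reorth: "Re (inner_U R (u - p) y) = 0" if y: "y \<in> Ur" for y
  proof (rule quad_zero)
    show "0 \<le> Re (inner_U R y y)" using m(2)[of y] m(1) unfolding normU_sq[OF herm]
      by (smt (verit) mult_nonneg_nonneg zero_le_power2)
    show "\<forall>s. 0 \<le> s\<^sup>2 * Re (inner_U R y y) - 2 * s * Re (inner_U R (u - p) y)"
    proof
      fix s
      have "p + complex_of_real s *s y \<in> Ur"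
        using pUr sub_smult_real[OF K Ur y] Ur unfolding K_subspace_def by blast
      hence "G p \<le> G (p + complex_of_real s *s y)" by (rule pmin')
      also have "G (p + complex_of_real s *s y) = G p - 2 * s * Re (inner_U R (u - p) y) + s^2 * Re (inner_U R y y)"
        unfolding G_def using expand[OF herm, of "u - p" s y] by (simp add: diff_diff_eq)
      finally show "0 \<le> s\<^sup>2 * Re (inner_U R y y) - 2 * s * Re (inner_U R (u - p) y)" by simp
    qed
  qed
  have orth: "inner_U R (u - p) y = 0" if y: "y \<in> Ur" for y
  proof (cases "K = UNIV")
    case True
    have "\<i> *s y \<in> Ur" using Ur y True unfolding K_subspace_def by blast
    from reorth[OF this] have "Im (inner_U R (u - p) y) = 0"
      by (simp add: inner_U_def cinner_smult_right)
    with reorth[OF y] show ?thesis by (simp add: complex_eq_iff)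
  next
    case False
    hence KR: "K = \<real>" using K by blast
    have "in_K \<real> p" "in_K \<real> y" using pUr y Ur KR unfolding K_subspace_def by auto
    hence "in_K \<real> (u - p)" using uK KR unfolding in_K_def by auto
    hence "inner_U R (u - p) y \<in> \<real>" unfolding inner_U_def
      using in_K_real_cinner RK KR \<open>in_K \<real> y\<close> by blast
    with reorth[OF y] show ?thesis by (simp add: complex_eq_iff complex_is_Real_iff)
  qed
  have uniq: "q = p" if q: "q \<in> Ur" "\<forall>x\<in>Ur. inner_U R (u - q) x = 0" for q
  proof -
    have d: "p - q \<in> Ur" by (rule sub_diff[OF K Ur pUr q(1)])
    have "inner_U R (p - q) (p - q) = inner_U R (u - q) (p - q) - inner_U R (u - p) (p - q)"
      unfolding inner_U_def by (simp add: matrix_vector_mult_diff_distrib cinner_diff_left)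
    also have "\<dots> = 0" using q(2) orth d by simp
    finally have "Re (cinner (p - q) (R *v (p - q))) = 0" using normU_sq[OF herm, of "p - q"] by simp
    hence "m * (norm (p - q))^2 \<le> 0" using m(2)[of "p - q"] by simp
    hence "norm (p - q) = 0" using m(1) by (simp add: mult_le_0_iff)
    thus ?thesis by simp
  qed
  have "proj_U R Ur u = p" unfolding proj_U_def
  proof (rule the_equality)
    show "p \<in> Ur \<and> (\<forall>x\<in>Ur. inner_U R (u - p) x = 0)" using pUr orth by blast
    show "q = p" if "q \<in> Ur \<and> (\<forall>x\<in>Ur. inner_U R (u - q) x = 0)" for q
      using uniq that by blast
  qed
  thus ?thesis using pUr orth by simp
qed

lemma Re_inner_nonneg: assumes "hermitian R" "pos_def R" shows "0 \<le> Re (inner_U R x x)"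
proof -
  obtain m where m: "m > 0" "\<And>x. m * (norm x)^2 \<le> Re (cinner x (R *v x))"
    using pd_lower[OF assms(2)] by blast
  have "0 \<le> m * (norm x)^2" using m(1) by simp
  thus ?thesis using m(2)[of x] normU_sq[OF assms(1), of x] by linarith
qed

lemma normU_swap: "norm_U R (x - y) = norm_U R (y - x)"
  by (simp add: norm_U_def inner_U_def matrix_vector_mult_diff_distrib cinner_diff_left cinner_diff_right algebra_simps)

theorem proposition4p1:
  fixes K :: "complex set"
    and R :: "complex^'n^'n" and A :: "complex^'n^'n" and Theta :: "complex^'n^'k"
    and b u ur :: "complex^'n" and Ur :: "(complex^'n) set"
  assumes K: "K = \<real> \<or> K = UNIV"
    and R_K: "mat_in_K K R" and R_herm: "hermitian R" and R_pd: "pos_def R"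
    and A_K: "mat_in_K K A" and b_K: "in_K K b" and u_K: "in_K K u"
    and Theta_K: "mat_in_K K Theta"
    and sol: "A *v u = b"
    and Ur: "K_subspace K Ur"
    and Ur_nontriv: "\<exists>x\<in>Ur. x \<noteq> 0"
    and Theta_inj: "\<forall>x\<in>Ur. x \<noteq> 0 \<longrightarrow> Theta *v x \<noteq> 0"
    and ur: "ur \<in> Ur"
    and galerkin: "dual_norm_Theta R Theta Ur (b - A *v ur) = 0"
    and alpha_pos: "alpha_Theta R Theta Ur A > 0"
  shows "norm_U R (u - ur) \<le>
    (1 + beta_Theta K R Theta Ur A u / alpha_Theta R Theta Ur A) * norm_U R (u - proj_U R Ur u)"
proof -
  define Ri where "Ri = matrix_inv R"
  define f where "f y x = cmod (cinner (Theta *v (Ri *v y)) (Theta *v x)) / norm (Theta *v x)" for y x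
  define D where "D y = dual_norm_Theta R Theta Ur y" for y
  define nU where "nU x = norm_U R x" for x
  define V where "V = {c *s u + v | c v. c \<in> K \<and> v \<in> Ur}"
  define \<alpha> where "\<alpha> = alpha_Theta R Theta Ur A"
  define \<beta> where "\<beta> = beta_Theta K R Theta Ur A u"
  define p where "p = proj_U R Ur u"
  have D_eq: "D y = (SUP x\<in>Ur-{0}. f y x)" for y by (simp add: D_def f_def dual_norm_Theta_def Ri_def)
  have al_eq: "\<alpha> = (INF x\<in>Ur-{0}. D (A *v x) / nU x)" by (simp add: \<alpha>_def alpha_Theta_def D_def nU_def)
  have be_eq: "\<beta> = (SUP x\<in>V-{0}. D (A *v x) / nU x)" by (simp add: \<beta>_def beta_Theta_def D_def nU_def V_def)
  obtain x0 where x0: "x0 \<in> Ur" "x0 \<noteq> 0" using Ur_nontriv by blast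
  have ne: "Ur - {0} \<noteq> {}" using x0 by blast
  have fle: "f y x \<le> norm (Theta *v (Ri *v y))" for y x
  proof (cases "norm (Theta *v x) = 0")
    case True then show ?thesis by (simp add: f_def)
  next
    case False
    hence "0 < norm (Theta *v x)" by simp
    thus ?thesis unfolding f_def using cs[of "Theta *v (Ri *v y)" "Theta *v x"]
      by (simp add: divide_le_eq)
  qed
  have f0: "0 \<le> f y x" for y x by (simp add: f_def)
  have bddf: "bdd_above (f y ` (Ur-{0}))" for y
    by (intro bdd_aboveI2[where M="norm (Theta *v (Ri *v y))"] fle)
  have fD: "f y x \<le> D y" if "x \<in> Ur-{0}" for y x
    unfolding D_eq by (rule cSUP_upper[OF that bddf])
  have D0: "0 \<le> D y" for y using f0[of y x0] fD[of x0 y] x0 by simp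
  have Dle: "D y \<le> norm (Theta *v (Ri *v y))" for y
    unfolding D_eq by (rule cSUP_least[OF ne fle])
  obtain m where m: "m > 0" "\<And>x. m * (norm x)^2 \<le> Re (cinner x (R *v x))"
    using pd_lower[OF R_pd] by blast
  have nU_low: "sqrt m * norm x \<le> nU x" for x
  proof -
    have "sqrt m * norm x = sqrt (m * (norm x)^2)" by (simp add: real_sqrt_mult)
    also have "\<dots> \<le> nU x" unfolding nU_def norm_U_def normU_sq[OF R_herm]
      using m(2) real_sqrt_le_mono by blast
    finally show ?thesis .
  qed
  have nU_pos: "nU x > 0" if "x \<noteq> 0" for x
  proof -
    have "sqrt m * norm x > 0" using m(1) that by simp
    thus ?thesis using nU_low[of x] by linarith
  qed
  have nU0: "0 \<le> nU x" for x unfolding nU_def norm_U_def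
    using Re_inner_nonneg[OF R_herm R_pd, of x] by simp
  have "bounded_linear (\<lambda>x. Theta *v (Ri *v (A *v x)))"
    by (intro bounded_linear_compose[OF matrix_vector_mul_bounded_linear]
        matrix_vector_mul_bounded_linear)
  then obtain C where C: "C > 0" "\<And>x. norm (Theta *v (Ri *v (A *v x))) \<le> norm x * C"
    using bounded_linear.pos_bounded by blast
  have hbound: "D (A *v x) / nU x \<le> C / sqrt m" if "x \<noteq> 0" for x
  proof -
    have "D (A *v x) \<le> norm x * C" using Dle[of "A *v x"] C(2)[of x] by linarith
    moreover have "sqrt m * norm x \<le> nU x" by (rule nU_low)
    moreover have "nU x > 0" using nU_pos[OF that] .
    moreover have "norm x > 0" using that by simp
    ultimately have "D (A *v x) * sqrt m \<le> C * nU x"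
    proof -
      have "D (A *v x) * sqrt m \<le> (norm x * C) * sqrt m"
        by (rule mult_right_mono) (use \<open>D (A *v x) \<le> norm x * C\<close> m(1) in auto)
      also have "\<dots> = C * (sqrt m * norm x)" by (simp add: ac_simps)
      also have "\<dots> \<le> C * nU x"
        by (rule mult_left_mono) (use C(1) nU_low in auto)
      finally show ?thesis .
    qed
    moreover have "sqrt m > 0" using m(1) by simp
    ultimately show ?thesis using nU_pos[OF that] by (simp add: field_simps)
  qed
  have bddV: "bdd_above ((\<lambda>x. D (A *v x) / nU x) ` (V-{0}))"
    by (rule bdd_aboveI2[where M="C / sqrt m"]) (use hbound in auto)
  have bddU: "bdd_below ((\<lambda>x. D (A *v x) / nU x) ` (Ur-{0}))"
    by (rule bdd_belowI2[where m=0]) (use D0 nU0 in auto)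
  have x0V: "x0 \<in> V" unfolding V_def using x0 K by (intro CollectI exI[of _ 0] exI[of _ x0]) auto
  have beta0: "0 \<le> \<beta>"
  proof -
    have "0 \<le> D (A *v x0) / nU x0" using D0 nU0 by simp
    also have "\<dots> \<le> \<beta>" unfolding be_eq using x0V x0 by (intro cSUP_upper[OF _ bddV]) auto
    finally show ?thesis .
  qed
  have alpha: "\<alpha> > 0" using alpha_pos \<alpha>_def by simp
  from proj_prop[OF K R_K R_herm R_pd Ur u_K]
  have pUr: "p \<in> Ur" and orth: "\<And>x. x \<in> Ur \<Longrightarrow> inner_U R (u - p) x = 0" unfolding p_def by auto
  define e where "e = p - ur"
  define w where "w = p - u"
  have eUr: "e \<in> Ur" unfolding e_def by (rule sub_diff[OF K Ur pUr ur])
  have wV: "w \<in> V" unfolding V_def w_def using pUr K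
    by (intro CollectI exI[of _ "-1"] exI[of _ p]) (auto simp: neg_smult)
  have gal0: "cinner (Theta *v (Ri *v (b - A *v ur))) (Theta *v x) = 0" if x: "x \<in> Ur - {0}" for x
  proof -
    have "f (b - A *v ur) x \<le> 0" using fD[OF x, of "b - A *v ur"] galerkin D_def by simp
    hence "f (b - A *v ur) x = 0" using f0 by (simp add: order_antisym)
    moreover have "Theta *v x \<noteq> 0" using Theta_inj x by auto
    ultimately show ?thesis by (simp add: f_def)
  qed
  have Ae: "A *v e = A *v w + (b - A *v ur)" unfolding e_def w_def using sol
    by (simp add: matrix_vector_mult_diff_distrib)
  have fe: "f (A *v e) x = f (A *v w) x" if "x \<in> Ur - {0}" for x
    unfolding f_def Ae matrix_vector_right_distrib cinner_add_left gal0[OF that] by simp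
  have DAe: "D (A *v e) = D (A *v w)" unfolding D_eq using fe by (rule SUP_cong[OF refl])
  have Dw: "D (A *v w) \<le> \<beta> * nU w"
  proof (cases "w = 0")
    case True
    have "D 0 = 0" unfolding D_eq f_def using ne by simp
    thus ?thesis using True by (simp add: nU_def norm_U_def inner_U_def)
  next
    case False
    have "D (A *v w) / nU w \<le> \<beta>" unfolding be_eq using wV False by (intro cSUP_upper[OF _ bddV]) auto
    thus ?thesis using nU_pos[OF False] by (simp add: divide_le_eq)
  qed
  have nUw: "nU w = nU (u - p)" unfolding nU_def w_def by (rule normU_swap)
  have key: "nU e \<le> \<beta> / \<alpha> * nU (u - p)"
  proof (cases "e = 0")
    case True
    then show ?thesis using beta0 alpha nU0 by (simp add: nU_def norm_U_def inner_U_def)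
  next
    case False
    have "\<alpha> \<le> D (A *v e) / nU e" unfolding al_eq using eUr False by (intro cINF_lower[OF bddU]) auto
    hence "\<alpha> * nU e \<le> D (A *v e)" using nU_pos[OF False] by (simp add: le_divide_eq)
    also have "\<dots> \<le> \<beta> * nU (u - p)" using DAe Dw nUw by simp
    finally show ?thesis using alpha by (simp add: field_simps)
  qed
  have uur: "u - ur = (u - p) + e" unfolding e_def by simp
  have c1: "inner_U R (u - p) e = 0" by (rule orth[OF eUr])
  have c2: "inner_U R e (u - p) = 0" using c1 herm_sym[OF R_herm, of e "u - p"] by (simp add: inner_U_def)
  have "inner_U R (u - ur) (u - ur) = inner_U R (u - p) (u - p) + inner_U R e e"
    unfolding uur inner_U_def
    using c1 c2 unfolding inner_U_def by (simp add: matrix_vector_right_distrib cinner_add_left cinner_add_right)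
  hence "nU (u - ur) = sqrt (Re (inner_U R (u - p) (u - p)) + Re (inner_U R e e))"
    by (simp add: nU_def norm_U_def)
  also have "\<dots> \<le> nU (u - p) + nU e" unfolding nU_def norm_U_def
    by (intro sqrt_add_le_add_sqrt Re_inner_nonneg R_herm R_pd)
  also have "\<dots> \<le> nU (u - p) + \<beta> / \<alpha> * nU (u - p)" using key by simp
  also have "\<dots> = (1 + \<beta> / \<alpha>) * nU (u - p)" by (simp add: algebra_simps)
  finally show ?thesis by (simp add: nU_def \<alpha>_def \<beta>_def p_def)
qed

end
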